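(* Let $\alpha>2$ with $\alpha\notin\mathbb N$ and $\lfloor\alpha\rfloor=2m$ for some $m\in\mathbb N$, and let $k\in\mathbb N$. With \[ L(\lambda)=2\sum_{j=1}^m\Big(1+2\lambda\cos\frac{2j\pi}{\alpha}+\lambda^2\Big)^{\alpha k/2}+(1-\alpha)(1+\lambda)^{\alpha k}-\frac{\alpha\sin(\alpha\pi)}{\pi}\int_0^{1/\lambda}\frac{s^{\alpha-1}(1-\lambda s)^{\alpha k}}{s^{2\alpha}-2s^\alpha\cos(\alpha\pi)+1}\,ds, \] there exists $\lambda_0>0$ such that $L(\lambda)<0$ for all $\lambda\in(0,\lambda_0)$. *)

theory Defs
  imports "HOL-Analysis.Analysis"
begin

text \<open>The function L(lambda) from the paper (parameters alpha, m, k).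
  Real powers with non-integer exponent are written with powr; all bases are
  nonnegative on the relevant range.\<close>
definition L_fun :: "real \<Rightarrow> nat \<Rightarrow> nat \<Rightarrow> real \<Rightarrow> real" where
  "L_fun \<alpha> m k lam =
     2 * (\<Sum>j=1..m. (1 + 2 * lam * cos (2 * real j * pi / \<alpha>) + lam^2) powr (\<alpha> * real k / 2))
     + (1 - \<alpha>) * (1 + lam) powr (\<alpha> * real k)
     - (\<alpha> * sin (\<alpha> * pi) / pi) *
       integral {0..1/lam}
         (%s. s powr (\<alpha> - 1) * (1 - lam * s) powr (\<alpha> * real k)
               / (s powr (2 * \<alpha>) - 2 * s powr \<alpha> * cos (\<alpha> * pi) + 1))"

end

theory Submission
  imports Defs
begin

lemma bern_powr:
  fixes r x :: real
  assumes "r \<ge> 1" "0 \<le> x" "x \<le> 1"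
  shows "1 - r * x \<le> (1 - x) powr r"
proof (cases "x = 1")
  case True then show ?thesis using assms by simp
next
  case False
  then have x1: "x < 1" using assms by simp
  let ?f = "\<lambda>t. (1 - t) powr r + r * t"
  have "?f 0 \<le> ?f x"
  proof (rule DERIV_nonneg_imp_increasing_open[OF assms(2)])
    fix t assume t: "0 < t" "t < x"
    have d: "DERIV ?f t :> r * (1 - t) powr (r - of_nat 1) * (-1) + r"
      by (rule derivative_eq_intros DERIV_fun_powr | use t x1 in simp)+
    have "(1 - t) powr (r - 1) \<le> 1" using t x1 assms by (intro powr_le1) auto
    then have "r * (1 - t) powr (r - of_nat 1) * (-1) + r \<ge> 0" using assms by (simp add: algebra_simps)
    with d show "\<exists>y. DERIV ?f t :> y \<and> y \<ge> 0" by blast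
  next
    show "continuous_on {0..x} ?f" using x1
      by (intro continuous_intros) auto
  qed
  then show ?thesis by simp
qed

lemma powr_2a: "(s::real) powr (2*a) = (s powr a)^2"
  by (simp add: power2_eq_square flip: powr_add)

lemma D_pos:
  fixes c \<sigma> \<alpha> s :: real
  assumes "c^2 + \<sigma>^2 = 1" "\<sigma> > 0"
  shows "s powr (2*\<alpha>) - 2 * s powr \<alpha> * c + 1 > 0"
proof -
  have "s powr (2*\<alpha>) - 2 * s powr \<alpha> * c + 1 = (s powr \<alpha> - c)^2 + \<sigma>^2"
    using assms(1) unfolding powr_2a by (simp add: power2_eq_square algebra_simps)
  also have "\<dots> > 0" using assms(2) by (smt (verit) zero_le_power2 zero_less_power)
  finally show ?thesis .
qed

lemma FTC_g:
  fixes c \<sigma> \<alpha> R :: real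
  assumes cs: "c^2 + \<sigma>^2 = 1" and sp: "\<sigma> > 0" and a: "\<alpha> > 1" and R: "R \<ge> 0"
  defines "F \<equiv> \<lambda>s. arctan ((s powr \<alpha> - c) / \<sigma>) / (\<alpha> * \<sigma>)"
  shows "((\<lambda>s. s powr (\<alpha> - 1) / (s powr (2*\<alpha>) - 2 * s powr \<alpha> * c + 1)) has_integral (F R - F 0)) {0..R}"
proof (rule fundamental_theorem_of_calculus_interior[OF R])
  show "continuous_on {0..R} F" unfolding F_def using a sp
    by (intro continuous_intros continuous_on_powr') auto
next
  fix s assume s: "s \<in> {0<..<R}"
  then have s0: "s > 0" by simp
  have Dp: "s powr (2*\<alpha>) - 2 * s powr \<alpha> * c + 1 > 0" by (rule D_pos[OF cs sp])
  have "(F has_real_derivative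
        (1 / (1 + ((s powr \<alpha> - c) / \<sigma>)^2)) * (\<alpha> * s powr (\<alpha> - 1) / \<sigma>) / (\<alpha> * \<sigma>)) (at s)"
    unfolding F_def using s0 sp a
    by (auto intro!: derivative_eq_intros simp: has_real_derivative_powr divide_inverse mult_ac)
  moreover have "(1 / (1 + ((s powr \<alpha> - c) / \<sigma>)^2)) * (\<alpha> * s powr (\<alpha> - 1) / \<sigma>) / (\<alpha> * \<sigma>)
      = s powr (\<alpha> - 1) / (s powr (2*\<alpha>) - 2 * s powr \<alpha> * c + 1)"
  proof -
    have e: "s powr (2*\<alpha>) - 2 * s powr \<alpha> * c + 1 = (s powr \<alpha> - c)^2 + \<sigma>^2"
      using cs unfolding powr_2a by (simp add: power2_eq_square algebra_simps)
    have q: "1 + ((s powr \<alpha> - c) / \<sigma>)^2 = ((s powr \<alpha> - c)^2 + \<sigma>^2) / \<sigma>^2"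
      using sp by (simp add: field_simps power2_eq_square)
    have pos: "(s powr \<alpha> - c)^2 + \<sigma>^2 > 0" using sp by (smt (verit) zero_le_power2 zero_less_power)
    have gen: "\<And>Q p. Q > 0 \<Longrightarrow> 1 / (Q / \<sigma>^2) * (\<alpha> * p / \<sigma>) / (\<alpha> * \<sigma>) = p / Q"
      using sp a by (simp add: field_simps power2_eq_square)
    show ?thesis unfolding e q using gen[OF pos] .
  qed
  ultimately show "(F has_vector_derivative
      s powr (\<alpha> - 1) / (s powr (2*\<alpha>) - 2 * s powr \<alpha> * c + 1)) (at s)"
    by (simp add: has_real_derivative_iff_has_vector_derivative)
qed

lemma int_neg_pow:
  fixes \<alpha> R :: real
  assumes a: "\<alpha> > 1" and R: "R \<ge> 1"
  shows "integral {1..R} (\<lambda>s. s powr (-\<alpha>)) \<le> 1 / (\<alpha> - 1)"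
proof -
  let ?G = "\<lambda>s. s powr (1 - \<alpha>) / (1 - \<alpha>)"
  have "((\<lambda>s. s powr (-\<alpha>)) has_integral (?G R - ?G 1)) {1..R}"
  proof (rule fundamental_theorem_of_calculus_interior[OF R])
    show "continuous_on {1..R} ?G" using a by (intro continuous_intros) auto
  next
    fix s assume s: "s \<in> {1<..<R}"
    have s0: "s > 0" using s by simp
    have "((\<lambda>s. s powr (1 - \<alpha>)) has_real_derivative (1-\<alpha>) * s powr (1 - \<alpha> - 1)) (at s)"
      by (rule has_real_derivative_powr[OF s0])
    then have "(?G has_real_derivative ((1 - \<alpha>) * s powr (1 - \<alpha> - 1)) / (1 - \<alpha>)) (at s)"
      by (rule DERIV_cdivide)
    then show "(?G has_vector_derivative s powr (-\<alpha>)) (at s)"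
      using a by (simp add: has_real_derivative_iff_has_vector_derivative)
  qed
  then have "integral {1..R} (\<lambda>s. s powr (-\<alpha>)) = ?G R - ?G 1" by (rule integral_unique)
  also have "\<dots> = (R powr (1 - \<alpha>) - 1) / (1 - \<alpha>)" by (simp add: diff_divide_distrib)
  also have "\<dots> = (1 - R powr (1 - \<alpha>)) / (\<alpha> - 1)" by (metis minus_divide_divide minus_diff_eq)
  also have "\<dots> \<le> 1 / (\<alpha> - 1)" using a by (simp add: divide_right_mono)
  finally show ?thesis .
qed

lemma pt_bound1:
  fixes c \<alpha> s :: real
  assumes c: "c \<le> 1" and a: "\<alpha> > 2" and s: "s \<ge> 1" and Dp: "s powr (2*\<alpha>) - 2 * s powr \<alpha> * c + 1 > 0"
  shows "s * (s powr (\<alpha> - 1) / (s powr (2*\<alpha>) - 2 * s powr \<alpha> * c + 1))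
     \<le> 2 * (s powr (\<alpha> - 1) / (s powr (2*\<alpha>) - 2 * s powr \<alpha> * c + 1)) + s powr (-\<alpha>)"
proof -
  define A where "A = s powr (\<alpha> - 2)"
  have A1: "A \<ge> 1" unfolding A_def using s a by (simp add: ge_one_powr_ge_zero)
  have e1: "s powr (\<alpha> - 1) = A * s"
  proof -
    have "s powr (\<alpha> - 1) = s powr ((\<alpha> - 2) + 1)" by simp
    also have "\<dots> = A * s" unfolding A_def powr_add using s by simp
    finally show ?thesis .
  qed
  have e2: "s powr \<alpha> = A * s^2"
  proof -
    have "s powr \<alpha> = s powr ((\<alpha> - 2) + 2)" by simp
    also have "\<dots> = A * s^2" unfolding A_def powr_add using s by simp
    finally show ?thesis .
  qed
  have e3: "s powr (2*\<alpha>) = (A * s^2)^2" unfolding powr_2a e2 ..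
  have e4: "s powr (-\<alpha>) = 1 / (A * s^2)" using e2 s by (simp add: powr_minus_divide)
  define D where "D = (A * s^2)^2 - 2 * (A * s^2) * c + 1"
  have Dp': "D > 0" using Dp unfolding D_def e2 e3 .
  have key: "A * s * s * (A * s^2) \<le> 2 * (A * s) * (A * s^2) + D"
  proof -
    have "0 \<le> 2 * A^2 * s^3 - 2 * A * s^2 + 1"
    proof -
      have "A * s \<ge> 1" using A1 s by (metis mult_mono' one_le_mult_iff  order.trans zero_le_one mult_1_right)
      then have "2 * A * s^2 * (A * s - 1) \<ge> 0" using A1 s by simp
      then show ?thesis by (simp add: algebra_simps power2_eq_square power3_eq_cube)
    qed
    moreover have "2 * A * s^2 * c \<le> 2 * A * s^2" using c A1 s by simp
    ultimately show ?thesis unfolding D_def by (simp add: algebra_simps power2_eq_square power3_eq_cube power4_eq_xxxx)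
  qed
  have h: "A > 0" "s > 0" using A1 s by auto
  have p: "A * s^2 > 0" using h by simp
  have "s * (A * s / D) = (A * s * s * (A * s^2)) / (D * (A * s^2))" using h p Dp' by (simp add: power2_eq_square)
  also have "\<dots> \<le> (2 * (A * s) * (A * s^2) + D) / (D * (A * s^2))"
    using key p Dp' by (intro divide_right_mono) auto
  also have "\<dots> = 2 * (A * s / D) + 1 / (A * s^2)" using h p Dp' by (simp add: add_divide_distrib power2_eq_square)
  finally show ?thesis unfolding e1 e2 e3 e4 D_def[symmetric] .
qed

lemma g_cont:
  fixes c \<sigma> \<alpha> a b :: real
  assumes cs: "c^2 + \<sigma>^2 = 1" and sp: "\<sigma> > 0" and a: "\<alpha> > 1" and ab: "0 \<le> a"
  shows "continuous_on {a..b} (\<lambda>s. s powr (\<alpha> - 1) / (s powr (2*\<alpha>) - 2 * s powr \<alpha> * c + 1))"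
proof -
  have "\<forall>s\<in>{a..b}. s powr (2*\<alpha>) - 2 * s powr \<alpha> * c + 1 \<noteq> 0"
    using D_pos[OF cs sp] by (smt (verit))
  then show ?thesis using a ab
    by (intro continuous_intros continuous_on_powr') auto
qed

lemma J_bound:
  fixes c \<sigma> \<alpha> R :: real
  assumes cs: "c^2 + \<sigma>^2 = 1" and sp: "\<sigma> > 0" and a: "\<alpha> > 2" and R: "R \<ge> 1"
  defines "g \<equiv> \<lambda>s. s powr (\<alpha> - 1) / (s powr (2*\<alpha>) - 2 * s powr \<alpha> * c + 1)"
  shows "integral {0..R} (\<lambda>s. s * g s) \<le> 2 * integral {0..R} g + 1 / (\<alpha> - 1)"
proof -
  have c1: "c \<le> 1" using cs sp by (smt (verit) power2_le_imp_le zero_le_power2 abs_le_square_iff one_power2)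
  have gc: "\<And>a b. 0 \<le> a \<Longrightarrow> continuous_on {a..b} g" unfolding g_def using g_cont[OF cs sp] a by auto
  have gi: "\<And>a b. 0 \<le> a \<Longrightarrow> g integrable_on {a..b}" using gc integrable_continuous_interval by blast
  have sgc: "\<And>a b. 0 \<le> a \<Longrightarrow> continuous_on {a..b} (\<lambda>s. s * g s)" using gc by (intro continuous_intros) auto
  have sgi: "\<And>a b. 0 \<le> a \<Longrightarrow> (\<lambda>s. s * g s) integrable_on {a..b}" using sgc integrable_continuous_interval by blast
  have pi: "(\<lambda>s. s powr (-\<alpha>)) integrable_on {1..R}"
    by (intro integrable_continuous_interval continuous_intros) auto
  have gnn: "\<And>s. s \<ge> 0 \<Longrightarrow> g s \<ge> 0" unfolding g_def using D_pos[OF cs sp] by (simp add: less_imp_le)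
  have I1: "integral {0..1} (\<lambda>s. s * g s) \<le> integral {0..1} (\<lambda>s. 2 * g s)"
  proof (rule integral_le)
    show "(\<lambda>s. 2 * g s) integrable_on {0..1}" using gc[of 0 1] by (intro integrable_continuous_interval continuous_intros) auto
  next
    fix s assume "s \<in> {0..1::real}"
    then show "s * g s \<le> 2 * g s" using gnn[of s] by (intro mult_right_mono) auto
  qed (use sgi in auto)
  have I2: "integral {1..R} (\<lambda>s. s * g s) \<le> integral {1..R} (\<lambda>s. 2 * g s + s powr (-\<alpha>))"
  proof (rule integral_le)
    show "(\<lambda>s. 2 * g s + s powr (-\<alpha>)) integrable_on {1..R}" using gc[of 1 R]
      by (intro integrable_continuous_interval continuous_intros) auto
  next
    fix s assume s: "s \<in> {1..R}"
    show "s * g s \<le> 2 * g s + s powr (-\<alpha>)" unfolding g_def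
      by (rule pt_bound1[OF c1 a]) (use s D_pos[OF cs sp] in auto)
  qed (use sgi in auto)
  have "integral {0..R} (\<lambda>s. s * g s) = integral {0..1} (\<lambda>s. s * g s) + integral {1..R} (\<lambda>s. s * g s)"
    using Henstock_Kurzweil_Integration.integral_combine[where a=0 and c=1 and b=R and f="\<lambda>s. s * g s"] R sgi[of 0 R] by auto
  also have "\<dots> \<le> integral {0..1} (\<lambda>s. 2 * g s) + integral {1..R} (\<lambda>s. 2 * g s + s powr (-\<alpha>))"
    using I1 I2 by simp
  also have "\<dots> = 2 * (integral {0..1} g + integral {1..R} g) + integral {1..R} (\<lambda>s. s powr (-\<alpha>))"
    using gi[of 1 R] pi by (simp add: integral_add algebra_simps)
  also have "\<dots> = 2 * integral {0..R} g + integral {1..R} (\<lambda>s. s powr (-\<alpha>))"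
    using Henstock_Kurzweil_Integration.integral_combine[where a=0 and c=1 and b=R and f=g] R gi[of 0 R] by auto
  also have "\<dots> \<le> 2 * integral {0..R} g + 1 / (\<alpha> - 1)"
    using int_neg_pow[of \<alpha> R] a R by simp
  finally show ?thesis .
qed

lemma arctan_init:
  fixes \<theta> :: real
  assumes "0 < \<theta>" "\<theta> < pi"
  shows "arctan (- cos \<theta> / sin \<theta>) = \<theta> - pi/2"
proof -
  have "tan (\<theta> - pi/2) = - cos \<theta> / sin \<theta>"
    by (simp add: tan_def sin_diff cos_diff)
  then show ?thesis using arctan_tan[of "\<theta> - pi/2"] assms by simp
qed

lemma arctan_lower:
  fixes X :: real
  assumes "X > 0"
  shows "arctan X \<ge> pi/2 - 1/X"
proof -
  have "arctan (1/X) = sgn X * pi/2 - arctan X" by (rule Transcendental.arctan_inverse) (use assms in simp)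
  then have "arctan (1/X) = pi/2 - arctan X" using assms by simp
  moreover have "arctan (1/X) \<le> 1/X" using assms by (intro arctan_le_self) simp
  ultimately show ?thesis by simp
qed

lemma sin_per: "sin (x + real m * (2*pi)) = sin x"
proof (induction m)
  case (Suc m)
  have "x + real (Suc m) * (2*pi) = (x + real m * (2*pi)) + 2*pi" by (simp add: algebra_simps)
  then show ?case using Suc by (simp only: sin_periodic)
qed simp

lemma cos_per: "cos (x + real m * (2*pi)) = cos x"
proof (induction m)
  case (Suc m)
  have "x + real (Suc m) * (2*pi) = (x + real m * (2*pi)) + 2*pi" by (simp add: algebra_simps)
  then show ?case using Suc by (simp only: cos_periodic)
qed simp

lemma Ig_bounds:
  fixes \<theta> \<alpha> R :: real
  assumes th: "0 < \<theta>" "\<theta> < pi" and a: "\<alpha> > 1" and R: "R \<ge> 0"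
  defines "c \<equiv> cos \<theta>" and "\<sigma> \<equiv> sin \<theta>"
  defines "g \<equiv> \<lambda>s. s powr (\<alpha> - 1) / (s powr (2*\<alpha>) - 2 * s powr \<alpha> * c + 1)"
  shows "integral {0..R} g \<le> (pi - \<theta>) / (\<alpha> * \<sigma>)"
    and "R powr \<alpha> > c \<Longrightarrow> integral {0..R} g \<ge> (pi - \<theta>) / (\<alpha> * \<sigma>) - 1 / (\<alpha> * (R powr \<alpha> - c))"
proof -
  have sp: "\<sigma> > 0" unfolding \<sigma>_def using th by (simp add: sin_gt_zero)
  have cs: "c^2 + \<sigma>^2 = 1" unfolding c_def \<sigma>_def by (simp add: add.commute)
  define F where "F = (\<lambda>s. arctan ((s powr \<alpha> - c) / \<sigma>) / (\<alpha> * \<sigma>))"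
  have "integral {0..R} g = F R - F 0"
    unfolding g_def F_def using FTC_g[OF cs sp a R] by (rule integral_unique)
  also have "F 0 = (\<theta> - pi/2) / (\<alpha> * \<sigma>)"
    unfolding F_def c_def \<sigma>_def using arctan_init[OF th] by simp
  finally have e: "integral {0..R} g = arctan ((R powr \<alpha> - c) / \<sigma>) / (\<alpha> * \<sigma>) - (\<theta> - pi/2) / (\<alpha> * \<sigma>)"
    unfolding F_def by simp
  have as: "\<alpha> * \<sigma> > 0" using a sp by simp
  have "(arctan ((R powr \<alpha> - c) / \<sigma>) - (\<theta> - pi/2)) / (\<alpha> * \<sigma>) \<le> (pi/2 - (\<theta> - pi/2)) / (\<alpha> * \<sigma>)"
  proof (rule divide_right_mono)
    have "arctan ((R powr \<alpha> - c) / \<sigma>) < pi/2" by (rule arctan_ubound)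
    then show "arctan ((R powr \<alpha> - c) / \<sigma>) - (\<theta> - pi/2) \<le> pi/2 - (\<theta> - pi/2)" by linarith
  qed (use as in simp)
  then show "integral {0..R} g \<le> (pi - \<theta>) / (\<alpha> * \<sigma>)" unfolding e
    by (simp add: diff_divide_distrib[symmetric])
  assume Rc: "R powr \<alpha> > c"
  have X: "(R powr \<alpha> - c) / \<sigma> > 0" using Rc sp by simp
  have "arctan ((R powr \<alpha> - c) / \<sigma>) \<ge> pi/2 - \<sigma> / (R powr \<alpha> - c)"
    using arctan_lower[OF X] by simp
  then have "arctan ((R powr \<alpha> - c) / \<sigma>) / (\<alpha> * \<sigma>) \<ge> (pi/2 - \<sigma> / (R powr \<alpha> - c)) / (\<alpha> * \<sigma>)"
    using as by (intro divide_right_mono) auto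
  moreover have "(pi/2 - \<sigma> / (R powr \<alpha> - c)) / (\<alpha> * \<sigma>) - (\<theta> - pi/2) / (\<alpha> * \<sigma>)
      = (pi - \<theta>) / (\<alpha> * \<sigma>) - 1 / (\<alpha> * (R powr \<alpha> - c))"
    using sp a Rc by (simp add: field_simps)
  ultimately show "integral {0..R} g \<ge> (pi - \<theta>) / (\<alpha> * \<sigma>) - 1 / (\<alpha> * (R powr \<alpha> - c))"
    unfolding e by linarith
qed

lemma term_deriv:
  fixes r c :: real
  shows "((\<lambda>x. (1 + 2 * x * c + x^2) powr (r / 2)) has_real_derivative r * c) (at 0)"
proof -
  have d: "((\<lambda>x. 1 + 2 * x * c + x^2) has_real_derivative 2 * c) (at 0)"
    by (auto intro!: derivative_eq_intros)
  have "((\<lambda>x. (1 + 2 * x * c + x^2) powr (r / 2)) has_real_derivative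
      r / 2 * (1 + 2 * 0 * c + 0^2) powr (r / 2 - of_nat 1) * (2 * c)) (at 0)"
    by (rule DERIV_fun_powr[OF d]) simp
  then show ?thesis by simp
qed

lemma A_deriv:
  fixes \<alpha> :: real and m k :: nat
  shows "((\<lambda>lam. 2 * (\<Sum>j=1..m. (1 + 2 * lam * cos (2 * real j * pi / \<alpha>) + lam^2) powr (\<alpha> * real k / 2))
           + (1 - \<alpha>) * (1 + lam) powr (\<alpha> * real k))
     has_real_derivative (2 * (\<Sum>j=1..m. \<alpha> * real k * cos (2 * real j * pi / \<alpha>)) + (1 - \<alpha>) * (\<alpha> * real k))) (at 0)"
proof -
  have s: "((\<lambda>lam. \<Sum>j=1..m. (1 + 2 * lam * cos (2 * real j * pi / \<alpha>) + lam^2) powr (\<alpha> * real k / 2))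
     has_real_derivative (\<Sum>j=1..m. \<alpha> * real k * cos (2 * real j * pi / \<alpha>))) (at 0)"
    by (rule DERIV_sum) (rule term_deriv)
  have d1: "((\<lambda>x. 1 + x) has_real_derivative 1) (at 0)" by (auto intro!: derivative_eq_intros)
  have p: "((\<lambda>lam. (1 + lam) powr (\<alpha> * real k)) has_real_derivative
      (\<alpha> * real k) * (1 + 0) powr (\<alpha> * real k - of_nat 1) * 1) (at 0)"
    by (rule DERIV_fun_powr[OF d1]) simp
  have "((\<lambda>lam. 2 * (\<Sum>j=1..m. (1 + 2 * lam * cos (2 * real j * pi / \<alpha>) + lam^2) powr (\<alpha> * real k / 2))
           + (1 - \<alpha>) * (1 + lam) powr (\<alpha> * real k))
     has_real_derivative (2 * (\<Sum>j=1..m. \<alpha> * real k * cos (2 * real j * pi / \<alpha>)) + (1 - \<alpha>) * ((\<alpha> * real k) * (1 + 0) powr (\<alpha> * real k - of_nat 1) * 1))) (at 0)"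
    by (intro DERIV_add DERIV_cmult s p)
  then show ?thesis by simp
qed

lemma I_lower:
  fixes c \<sigma> \<alpha> lam r :: real
  assumes cs: "c^2 + \<sigma>^2 = 1" and sp: "\<sigma> > 0" and a: "\<alpha> > 2" and lam: "lam > 0" and r: "r \<ge> 1"
  defines "g \<equiv> \<lambda>s. s powr (\<alpha> - 1) / (s powr (2*\<alpha>) - 2 * s powr \<alpha> * c + 1)"
  shows "integral {0..1/lam} (\<lambda>s. s powr (\<alpha> - 1) * (1 - lam * s) powr r / (s powr (2*\<alpha>) - 2 * s powr \<alpha> * c + 1))
     \<ge> integral {0..1/lam} g - r * lam * integral {0..1/lam} (\<lambda>s. s * g s)"
proof -
  have gc: "continuous_on {0..1/lam} g" unfolding g_def using g_cont[OF cs sp] a by auto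
  have gi: "g integrable_on {0..1/lam}" using gc integrable_continuous_interval by blast
  have sgi: "(\<lambda>s. s * g s) integrable_on {0..1/lam}"
    using gc by (intro integrable_continuous_interval continuous_intros) auto
  have Dnz: "\<forall>s\<in>{0..1/lam}. s powr (2*\<alpha>) - 2 * s powr \<alpha> * c + 1 \<noteq> 0"
    using D_pos[OF cs sp] by (smt (verit))
  have hc: "continuous_on {0..1/lam} (\<lambda>s. s powr (\<alpha> - 1) * (1 - lam * s) powr r / (s powr (2*\<alpha>) - 2 * s powr \<alpha> * c + 1))"
  proof -
    have bs: "\<forall>s\<in>{0..1/lam}. 0 \<le> 1 - lam * s \<and> (1 - lam * s = 0 \<longrightarrow> 0 < r)"
    proof
      fix s assume s: "s \<in> {0..1/lam}"
      then have "lam * s \<le> 1" using lam by (simp add: field_simps)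
      then show "0 \<le> 1 - lam * s \<and> (1 - lam * s = 0 \<longrightarrow> 0 < r)" using r by auto
    qed
    have c1: "continuous_on {0..1/lam} (\<lambda>s. s powr (\<alpha> - 1))"
      by (rule continuous_on_powr') (use a in \<open>auto intro: continuous_intros\<close>)
    have c2: "continuous_on {0..1/lam} (\<lambda>s. (1 - lam * s) powr r)"
      by (rule continuous_on_powr'[OF _ _ bs]) (intro continuous_intros)+
    have c3: "continuous_on {0..1/lam} (\<lambda>s. s powr (2*\<alpha>) - 2 * s powr \<alpha> * c + 1)"
    proof -
      have "continuous_on {0..1/lam} (\<lambda>s. s powr (2*\<alpha>))"
        by (rule continuous_on_powr') (use a in \<open>auto intro: continuous_intros\<close>)
      moreover have "continuous_on {0..1/lam} (\<lambda>s. s powr \<alpha>)"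
        by (rule continuous_on_powr') (use a in \<open>auto intro: continuous_intros\<close>)
      ultimately show ?thesis by (intro continuous_on_add continuous_on_diff continuous_on_mult continuous_on_const)
    qed
    show ?thesis by (rule continuous_on_divide[OF continuous_on_mult[OF c1 c2] c3]) (use Dnz in auto)
  qed
  have "integral {0..1/lam} (\<lambda>s. g s - (r * lam) * (s * g s))
      \<le> integral {0..1/lam} (\<lambda>s. s powr (\<alpha> - 1) * (1 - lam * s) powr r / (s powr (2*\<alpha>) - 2 * s powr \<alpha> * c + 1))"
  proof (rule integral_le)
    show "(\<lambda>s. g s - (r * lam) * (s * g s)) integrable_on {0..1/lam}"
      using gc by (intro integrable_continuous_interval continuous_intros) auto
    show "(\<lambda>s. s powr (\<alpha> - 1) * (1 - lam * s) powr r / (s powr (2*\<alpha>) - 2 * s powr \<alpha> * c + 1)) integrable_on {0..1/lam}"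
      using hc integrable_continuous_interval by blast
  next
    fix s assume s: "s \<in> {0..1/lam}"
    then have ls: "0 \<le> lam * s" "lam * s \<le> 1" using lam by (auto simp: field_simps)
    have b: "1 - r * (lam * s) \<le> (1 - lam * s) powr r" by (rule bern_powr[OF r ls])
    have Dp: "s powr (2*\<alpha>) - 2 * s powr \<alpha> * c + 1 > 0" by (rule D_pos[OF cs sp])
    have "s powr (\<alpha> - 1) * (1 - r * (lam * s)) \<le> s powr (\<alpha> - 1) * (1 - lam * s) powr r"
      using b by (intro mult_left_mono) auto
    then have "s powr (\<alpha> - 1) * (1 - r * (lam * s)) / (s powr (2*\<alpha>) - 2 * s powr \<alpha> * c + 1)
      \<le> s powr (\<alpha> - 1) * (1 - lam * s) powr r / (s powr (2*\<alpha>) - 2 * s powr \<alpha> * c + 1)"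
      using Dp by (intro divide_right_mono) auto
    moreover have "s powr (\<alpha> - 1) * (1 - r * (lam * s)) / (s powr (2*\<alpha>) - 2 * s powr \<alpha> * c + 1)
      = g s - (r * lam) * (s * g s)" unfolding g_def by (simp add: algebra_simps diff_divide_distrib)
    ultimately show "g s - (r * lam) * (s * g s) \<le> s powr (\<alpha> - 1) * (1 - lam * s) powr r / (s powr (2*\<alpha>) - 2 * s powr \<alpha> * c + 1)"
      by simp
  qed
  moreover have "integral {0..1/lam} (\<lambda>s. g s - (r * lam) * (s * g s))
      = integral {0..1/lam} g - r * lam * integral {0..1/lam} (\<lambda>s. s * g s)"
  proof -
    have "(\<lambda>s. (r * lam) * (s * g s)) integrable_on {0..1/lam}"
      using gc by (intro integrable_continuous_interval continuous_intros) auto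
    then have "integral {0..1/lam} (\<lambda>s. g s - (r * lam) * (s * g s))
       = integral {0..1/lam} g - integral {0..1/lam} (\<lambda>s. (r * lam) * (s * g s))"
      using gi by (rule Henstock_Kurzweil_Integration.integral_diff[rotated])
    then show ?thesis by simp
  qed
  ultimately show ?thesis by simp
qed

theorem lemma6p5:
  fixes \<alpha> :: real and m k :: nat
  assumes "\<alpha> > 2" and "\<alpha> \<notin> \<nat>" and "\<lfloor>\<alpha>\<rfloor> = int (2 * m)" and "k \<ge> 1"
  shows "\<exists>lam0>0. \<forall>lam. 0 < lam \<and> lam < lam0 \<longrightarrow> L_fun \<alpha> m k lam < 0"
proof -
  note a2 = assms(1) and nn = assms(2) and fl = assms(3) and k1 = assms(4)
  have "int 2 \<le> \<lfloor>\<alpha>\<rfloor>" using a2 by (simp add: le_floor_iff)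
  then have m1: "m \<ge> 1" using fl by simp
  have lo: "real (2*m) \<le> \<alpha>" using of_int_floor_le[of \<alpha>] fl by simp
  have hi: "\<alpha> < real (2*m) + 1" using real_of_int_floor_add_one_gt[of \<alpha>] fl by simp
  have ne: "\<alpha> \<noteq> real (2*m)" using nn by (metis of_nat_in_Nats)
  have lo': "real (2*m) < \<alpha>" using lo ne by simp
  define \<theta> where "\<theta> = (\<alpha> - real (2*m)) * pi"
  have th0: "0 < \<theta>" unfolding \<theta>_def using lo' by simp
  have th1: "\<theta> < pi" unfolding \<theta>_def using hi by simp
  have api: "\<alpha> * pi = \<theta> + real m * (2*pi)" unfolding \<theta>_def by (simp add: algebra_simps)
  define c where "c = cos (\<alpha> * pi)"
  define \<sigma> where "\<sigma> = sin (\<alpha> * pi)"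
  have c_th: "cos \<theta> = c" unfolding c_def api cos_per ..
  have s_th: "sin \<theta> = \<sigma>" unfolding \<sigma>_def api sin_per ..
  have sp: "\<sigma> > 0" using th0 th1 s_th sin_gt_zero by auto
  have cs: "c^2 + \<sigma>^2 = 1" unfolding c_def \<sigma>_def by (simp add: add.commute)
  have sle: "\<sigma> \<le> \<theta>" using s_th sin_x_le_x[of \<theta>] th0 by simp
  define r where "r = \<alpha> * real k"
  have r1: "r \<ge> 1"
  proof -
    have "real k \<ge> 1" using k1 by simp
    then have "\<alpha> * real k \<ge> \<alpha> * 1" using a2 by (intro mult_left_mono) auto
    then show ?thesis unfolding r_def using a2 by linarith
  qed
  define P where "P = \<alpha> * \<sigma> / pi"
  have P0: "P > 0" unfolding P_def using a2 sp by simp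
  define g where "g = (\<lambda>s::real. s powr (\<alpha> - 1) / (s powr (2*\<alpha>) - 2 * s powr \<alpha> * c + 1))"
  define S where "S = (\<Sum>j=1..m. cos (2 * real j * pi / \<alpha>))"
  have cm: "cos (2 * real m * pi / \<alpha>) < -1/2"
  proof -
    have "cos (2 * real m * pi / \<alpha>) < cos (2*pi/3)"
    proof (rule cos_monotone_0_pi)
      have "\<alpha> < 3 * real m" using hi m1 by simp
      then have "2*pi*\<alpha> < 2 * real m * pi * 3" by (simp add: algebra_simps)
      then show "2*pi/3 < 2 * real m * pi / \<alpha>" using a2 by (simp add: field_simps)
      have "2 * real m * pi \<le> pi * \<alpha>" using lo by (simp add: algebra_simps)
      then show "2 * real m * pi / \<alpha> \<le> pi" using a2 by (simp add: field_simps)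
    qed simp
    then show ?thesis by (simp add: cos_120)
  qed
  have Sb: "S < real m - 3/2"
  proof -
    obtain m' where m': "m = Suc m'" using m1 by (cases m) auto
    have "S = (\<Sum>j=1..m'. cos (2 * real j * pi / \<alpha>)) + cos (2 * real m * pi / \<alpha>)"
      unfolding S_def m' by simp
    moreover have "(\<Sum>j=1..m'. cos (2 * real j * pi / \<alpha>)) \<le> real m'"
      using sum_bounded_above[of "{1..m'}" "\<lambda>j. cos (2 * real j * pi / \<alpha>)" 1] by simp
    ultimately show ?thesis using cm m' by simp
  qed
  define Q where "Q = 2 * S + 1 - \<alpha> + 2 * (2 * real m + 1 - \<alpha>) + P / (\<alpha> - 1)"
  have Qn: "Q < 0"
  proof -
    have "\<alpha> * \<sigma> \<le> \<alpha> * ((\<alpha> - real (2*m)) * pi)" using sle a2 unfolding \<theta>_def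
      by (intro mult_left_mono) auto
    then have "P \<le> \<alpha> * (\<alpha> - real (2*m))" unfolding P_def
      by (simp add: pos_divide_le_eq mult_ac)
    then have "P / (\<alpha> - 1) \<le> \<alpha> * (\<alpha> - real (2*m)) / (\<alpha> - 1)" using a2 by (simp add: divide_right_mono)
    also have "\<dots> \<le> 2 * (\<alpha> - real (2*m))"
    proof -
      have "\<alpha> * (\<alpha> - real (2*m)) \<le> 2 * (\<alpha> - real (2*m)) * (\<alpha> - 1)"
      proof -
        have "0 \<le> (\<alpha> - real (2*m)) * (\<alpha> - 2)" using a2 lo' by simp
        then show ?thesis by (simp add: algebra_simps)
      qed
      then show ?thesis using a2 by (simp add: divide_le_eq)
    qed
    finally have "P / (\<alpha> - 1) \<le> 2 * (\<alpha> - real (2*m))" .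
    then show ?thesis unfolding Q_def using Sb lo' by simp
  qed
  define A where "A = (\<lambda>lam. 2 * (\<Sum>j=1..m. (1 + 2 * lam * cos (2 * real j * pi / \<alpha>) + lam^2) powr (\<alpha> * real k / 2))
           + (1 - \<alpha>) * (1 + lam) powr (\<alpha> * real k))"
  define A' where "A' = 2 * (\<Sum>j=1..m. \<alpha> * real k * cos (2 * real j * pi / \<alpha>)) + (1 - \<alpha>) * (\<alpha> * real k)"
  have A'e: "A' = r * (2 * S + 1 - \<alpha>)" unfolding A'_def r_def S_def
    by (simp add: sum_distrib_left[symmetric] algebra_simps)
  have A0: "A 0 = 2 * real m + 1 - \<alpha>" unfolding A_def by simp
  define \<eta> where "\<eta> = - r * Q / 2"
  have eta0: "\<eta> > 0" unfolding \<eta>_def using Qn r1 by (simp add: mult_pos_neg)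
  have "((\<lambda>y. (A y - A 0) / (y - 0)) \<longlongrightarrow> A') (at 0)"
    using A_deriv[where \<alpha>=\<alpha> and m=m and k=k] unfolding A_def A'_def by (simp add: has_field_derivative_iff)
  then have "eventually (\<lambda>y. (A y - A 0) / (y - 0) < A' + \<eta>) (at 0)"
    using eta0 by (intro order_tendstoD(2)) auto
  then have "eventually (\<lambda>y. (A y - A 0) / (y - 0) < A' + \<eta>) (at_right 0)"
    using eventually_at_split by blast
  then obtain b where b0: "b > 0" and bP: "\<And>y. y > 0 \<Longrightarrow> y < b \<Longrightarrow> (A y - A 0) / (y - 0) < A' + \<eta>"
    unfolding eventually_at_right_field by auto
  define lam0 where "lam0 = min b (min (1/2) (- r * Q / 8))"
  have lam00: "lam0 > 0" unfolding lam0_def using b0 Qn r1 by (simp add: mult_pos_neg)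
  show ?thesis
  proof (intro exI[of _ lam0] conjI allI impI lam00)
    fix lam assume lam: "0 < lam \<and> lam < lam0"
    then have l0: "lam > 0" and lb: "lam < b" and lh: "lam < 1/2" and lq: "lam < - r * Q / 8"
      unfolding lam0_def by auto
    define R where "R = 1 / lam"
    have R2: "R \<ge> 2" unfolding R_def using l0 lh by (simp add: field_simps)
    have hA: "A lam \<le> A 0 + lam * (A' + \<eta>)"
    proof -
      have "(A lam - A 0) / lam < A' + \<eta>" using bP[OF l0 lb] by simp
      then show ?thesis using l0 by (simp add: divide_less_eq algebra_simps)
    qed
    define Ih where "Ih = integral {0..1/lam} (\<lambda>s. s powr (\<alpha> - 1) * (1 - lam * s) powr (\<alpha> * real k)
               / (s powr (2 * \<alpha>) - 2 * s powr \<alpha> * cos (\<alpha> * pi) + 1))"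
    define Ig where "Ig = integral {0..R} g"
    define Jg where "Jg = integral {0..R} (\<lambda>s. s * g s)"
    have Lf: "L_fun \<alpha> m k lam = A lam - P * Ih"
      unfolding L_fun_def A_def P_def Ih_def \<sigma>_def by simp
    have hI: "Ih \<ge> Ig - r * lam * Jg"
      using I_lower[OF cs sp a2 l0 r1] unfolding Ih_def Ig_def Jg_def g_def R_def r_def c_def by simp
    have hJ: "Jg \<le> 2 * Ig + 1 / (\<alpha> - 1)"
      using J_bound[OF cs sp a2, of R] R2 unfolding Jg_def Ig_def g_def by simp
    have a1: "\<alpha> > 1" using a2 by simp
    have R0: "R \<ge> 0" using R2 by simp
    have gth: "g = (\<lambda>s. s powr (\<alpha> - 1) / (s powr (2*\<alpha>) - 2 * s powr \<alpha> * cos \<theta> + 1))"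
      unfolding g_def c_th ..
    have Ru: "Ig \<le> (pi - \<theta>) / (\<alpha> * \<sigma>)"
      using Ig_bounds(1)[OF th0 th1 a1 R0] unfolding Ig_def gth s_th .
    have RpR: "R powr \<alpha> \<ge> R^2"
    proof -
      have "R powr 2 \<le> R powr \<alpha>" using R2 a2 by (intro powr_mono) auto
      then show ?thesis using R2 by simp
    qed
    have c1: "c \<le> 1" unfolding c_def by simp
    have X: "R powr \<alpha> - c \<ge> R^2 / 2"
    proof -
      have "R^2 \<ge> 2^2" using R2 by (intro power_mono) auto
      then have "R^2 \<ge> 4" by simp
      then show ?thesis using RpR c1 by simp
    qed
    have "R^2 / 2 > 0" using R2 by simp
    then have Rc: "R powr \<alpha> > c" using X by linarith
    have Rl: "Ig \<ge> (pi - \<theta>) / (\<alpha> * \<sigma>) - 1 / (\<alpha> * (R powr \<alpha> - c))"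
      using Ig_bounds(2)[OF th0 th1 a1 R0] Rc unfolding Ig_def gth s_th c_th by simp
    have Pth: "P * ((pi - \<theta>) / (\<alpha> * \<sigma>)) = 2 * real m + 1 - \<alpha>"
      unfolding P_def \<theta>_def using sp a2 by (simp add: field_simps)
    have Perr: "P * (1 / (\<alpha> * (R powr \<alpha> - c))) \<le> 2 * lam^2"
    proof -
      have Xp: "R powr \<alpha> - c > 0" using Rc by simp
      have "P * (1 / (\<alpha> * (R powr \<alpha> - c))) = (\<alpha> * \<sigma>) / (\<alpha> * (pi * (R powr \<alpha> - c)))"
        unfolding P_def by (simp add: mult_ac)
      also have "\<dots> = \<sigma> / (pi * (R powr \<alpha> - c))" using a2 by (subst mult_divide_mult_cancel_left) auto
      also have "\<dots> = (\<sigma> / pi) * (1 / (R powr \<alpha> - c))" by simp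
      finally have "P * (1 / (\<alpha> * (R powr \<alpha> - c))) = (\<sigma> / pi) * (1 / (R powr \<alpha> - c))" .
      also have "\<dots> \<le> 1 * (1 / (R powr \<alpha> - c))"
      proof (rule mult_right_mono)
        have "\<sigma> \<le> 1" unfolding \<sigma>_def by simp
        then show "\<sigma> / pi \<le> 1" using pi_gt3 by (simp add: divide_le_eq)
      qed (use Xp in simp)
      also have "\<dots> \<le> 1 / (R^2 / 2)"
      proof -
        have "R^2 / 2 > 0" using R2 by simp
        then have "1 / (R powr \<alpha> - c) \<le> 1 / (R^2 / 2)" using X Xp
          by (intro divide_left_mono) (auto intro: mult_pos_pos)
        then show ?thesis by simp
      qed
      also have "\<dots> = 2 * lam^2" unfolding R_def using l0 by (simp add: field_simps)
      finally show ?thesis .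
    qed
    have h4: "P * Ig \<le> 2 * real m + 1 - \<alpha>" using mult_left_mono[OF Ru, of P] P0 Pth by simp
    have h5: "P * Ig \<ge> 2 * real m + 1 - \<alpha> - 2 * lam^2"
    proof -
      have "P * Ig \<ge> P * ((pi - \<theta>) / (\<alpha> * \<sigma>) - 1 / (\<alpha> * (R powr \<alpha> - c)))"
        using mult_left_mono[OF Rl, of P] P0 by simp
      then show ?thesis using Pth Perr by (simp add: right_diff_distrib)
    qed
    define K where "K = 2 * (2 * real m + 1 - \<alpha>) + P / (\<alpha> - 1)"
    have h3: "P * Jg \<le> K"
    proof -
      have "P * Jg \<le> P * (2 * Ig + 1 / (\<alpha> - 1))" using mult_left_mono[OF hJ, of P] P0 by simp
      then show ?thesis unfolding K_def using h4 P0 by (simp add: algebra_simps)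
    qed
    have rl0: "r * lam \<ge> 0" using r1 l0 by simp
    have h2: "P * Ih \<ge> P * Ig - r * lam * (P * Jg)"
      using mult_left_mono[OF hI, of P] P0 by (simp add: algebra_simps)
    have h6: "r * lam * (P * Jg) \<le> r * lam * K" using mult_left_mono[OF h3 rl0] .
    have QK: "Q = 2 * S + 1 - \<alpha> + K" unfolding Q_def K_def by simp
    have "L_fun \<alpha> m k lam \<le> A 0 + lam * (A' + \<eta>) - (2 * real m + 1 - \<alpha>) + 2 * lam^2 + r * lam * K"
      using Lf hA h2 h5 h6 by linarith
    also have "\<dots> = lam * (r * Q / 2) + 2 * lam^2"
      unfolding A0 A'e \<eta>_def QK by (simp add: field_simps)
    also have "\<dots> < lam * (r * Q / 2) + lam * (- r * Q / 4)"
    proof -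
      have "lam * lam < lam * (- r * Q / 8)" using lq l0 by (rule mult_strict_left_mono)
      moreover have "lam * (- r * Q / 4) = 2 * (lam * (- r * Q / 8))" by simp
      ultimately have "2 * lam * lam < lam * (- r * Q / 4)" by linarith
      moreover have "2 * lam^2 = 2 * lam * lam" by (simp add: power2_eq_square)
      ultimately show ?thesis by linarith
    qed
    also have "\<dots> = lam * (r * Q / 4)" by (simp add: algebra_simps)
    also have "\<dots> < 0" using l0 Qn r1 by (simp add: mult_pos_neg)
    finally show "L_fun \<alpha> m k lam < 0" .
  qed
qed

end
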